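(* Let $\mathcal{M}\subset\mathbb{R}^K$ be a submanifold with geodesic distance $d_{\mathcal{M}}$ and $\mu$ a Borel probability measure on $\mathcal{M}$. Let $p_2\in(0,0.5]$ and let $\mathcal{V}=\{X_1,\dots,X_n\}$ be an i.i.d. sample of size $n$ from $\mu$. Set $\delta^2=4n^{-1}\ln\big(\frac{4n^2}{p_2}\big)$. Then with probability at least $1-p_2$, for all $X_i\in\mathcal{V}$ and all $r>0$, $$\eta_1(B_{\mathcal{M}}(X_i,r))\le\tfrac32\mu(B_{\mathcal{M}}(X_i,r))+3\delta^2\quad\text{and}\quad\mu(B_{\mathcal{M}}(X_i,r))\le\tfrac32\eta_1(B_{\mathcal{M}}(X_i,r))+3\delta^2.$$
   Context: $B_{\mathcal{M}}(x,r)=\{y\in\mathcal{M}:d_{\mathcal{M}}(x,y)<r\}$; $\eta_1(W)=\frac1n\sum_{j=1}^n\mathbf{1}_{X_j\in W}$ is the empirical measure of the sample. *)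

theory Defs
  imports "HOL-Analysis.Analysis" "HOL-Probability.Probability"
begin

definition C1_on :: "'a::euclidean_space set \<Rightarrow> ('a \<Rightarrow> 'a) \<Rightarrow> bool" where
  "C1_on U f \<longleftrightarrow> (\<exists>D. (\<forall>y\<in>U. (f has_derivative blinfun_apply (D y)) (at y))
                       \<and> continuous_on U D)"

definition is_submanifold :: "'a::euclidean_space set \<Rightarrow> bool" where
  "is_submanifold M \<longleftrightarrow>
     (\<forall>x\<in>M. \<exists>U V \<phi> \<psi> L. open U \<and> x \<in> U \<and> open V \<and> subspace L \<and>
         \<phi> ` U = V \<and> (\<forall>y\<in>U. \<psi> (\<phi> y) = y) \<and> (\<forall>z\<in>V. \<phi> (\<psi> z) = z) \<and>
         C1_on U \<phi> \<and> C1_on V \<psi> \<and> \<phi> ` (M \<inter> U) = V \<inter> L)"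

definition curve_length :: "(real \<Rightarrow> 'a::real_normed_vector) \<Rightarrow> ereal" where
  "curve_length \<gamma> = (SUP (t, m) \<in> {(t :: nat \<Rightarrow> real, m :: nat).
        t 0 = 0 \<and> t m = 1 \<and> (\<forall>k<m. t k \<le> t (Suc k))}.
        ereal (\<Sum>k<m. norm (\<gamma> (t (Suc k)) - \<gamma> (t k))))"

text \<open>Geodesic (intrinsic) distance on M: infimum of lengths of curves in M
  joining x and y (\<infinity> if there are none).\<close>
definition geodesic_dist :: "'a::real_normed_vector set \<Rightarrow> 'a \<Rightarrow> 'a \<Rightarrow> ereal" where
  "geodesic_dist M x y = (INF \<gamma> \<in> {\<gamma>. path \<gamma> \<and> path_image \<gamma> \<subseteq> M \<and>
        pathstart \<gamma> = x \<and> pathfinish \<gamma> = y}. curve_length \<gamma>)"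

definition geo_ball :: "'a::real_normed_vector set \<Rightarrow> 'a \<Rightarrow> real \<Rightarrow> 'a set" where
  "geo_ball M x r = {y \<in> M. geodesic_dist M x y < ereal r}"

definition empirical :: "nat \<Rightarrow> (nat \<Rightarrow> 'a) \<Rightarrow> 'a set \<Rightarrow> real" where
  "empirical n x W = real (card {j \<in> {..<n}. x j \<in> W}) / real n"

end

theory Submission
  imports Defs
begin

lemma partition_mono:
  fixes t :: "nat \<Rightarrow> real"
  assumes "\<forall>k<m. t k \<le> t (Suc k)" "i \<le> j" "j \<le> m"
  shows "t i \<le> t j"
  using assms(2,3)
proof (induction j)
  case 0 then show ?case by simp
next
  case (Suc j)
  show ?case
  proof (cases "i = Suc j")
    case True then show ?thesis by simp
  next
    case False
    then have "i \<le> j" using Suc.prems by simp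
    then have "t i \<le> t j" using Suc by simp
    also have "t j \<le> t (Suc j)" using assms(1) Suc.prems by simp
    finally show ?thesis .
  qed
qed

lemma curve_length_nonneg: "0 \<le> curve_length \<gamma>"
proof -
  let ?t = "\<lambda>k::nat. if k = 0 then 0 else (1::real)"
  have "(?t, 1) \<in> {(t :: nat \<Rightarrow> real, m :: nat).
        t 0 = 0 \<and> t m = 1 \<and> (\<forall>k<m. t k \<le> t (Suc k))}" by auto
  then have "ereal (\<Sum>k<1. norm (\<gamma> (?t (Suc k)) - \<gamma> (?t k))) \<le> curve_length \<gamma>"
    unfolding curve_length_def by (rule SUP_upper2) auto
  moreover have "0 \<le> ereal (\<Sum>k<(1::nat). norm (\<gamma> (?t (Suc k)) - \<gamma> (?t k)))" by simp
  ultimately show ?thesis by (rule order_trans[rotated])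
qed

lemma curve_length_le:
  assumes "\<And>t m. t 0 = 0 \<Longrightarrow> t m = 1 \<Longrightarrow> (\<forall>k<m. t k \<le> t (Suc k)) \<Longrightarrow>
     (\<Sum>k<m. norm (\<gamma> (t (Suc k)) - \<gamma> (t k))) \<le> C"
  shows "curve_length \<gamma> \<le> ereal C"
  unfolding curve_length_def by (rule SUP_least) (auto intro: assms)

lemma curve_length_ge:
  assumes "t 0 = 0" "t m = 1" "\<forall>k<m. t k \<le> t (Suc k)"
  shows "ereal (\<Sum>k<m. norm (\<gamma> (t (Suc k)) - \<gamma> (t k))) \<le> curve_length \<gamma>"
  unfolding curve_length_def by (rule SUP_upper2[of "(t,m)"]) (use assms in auto)

lemma geodesic_dist_le:
  assumes "path \<gamma>" "path_image \<gamma> \<subseteq> M" "pathstart \<gamma> = x" "pathfinish \<gamma> = y"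
  shows "geodesic_dist M x y \<le> curve_length \<gamma>"
  unfolding geodesic_dist_def by (rule INF_lower) (use assms in auto)

lemma segment_length:
  fixes \<psi> :: "'a::real_normed_vector \<Rightarrow> 'b::real_normed_vector"
  assumes S: "convex S" and lip: "\<And>a b. a \<in> S \<Longrightarrow> b \<in> S \<Longrightarrow> norm (\<psi> a - \<psi> b) \<le> B * norm (a - b)"
    and B: "0 \<le> B" and im: "\<psi> ` S \<subseteq> M" and a: "a \<in> S" and b: "b \<in> S"
  shows "geodesic_dist M (\<psi> a) (\<psi> b) \<le> ereal (B * norm (b - a))"
proof -
  define \<gamma> where "\<gamma> = (\<lambda>t::real. \<psi> (a + t *\<^sub>R (b - a)))"
  have inS: "a + t *\<^sub>R (b - a) \<in> S" if "t \<in> {0..1}" for t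
  proof -
    have "(1 - t) *\<^sub>R a + t *\<^sub>R b \<in> S" using S a b that by (auto simp: convex_alt)
    moreover have "(1 - t) *\<^sub>R a + t *\<^sub>R b = a + t *\<^sub>R (b - a)" by (simp add: algebra_simps)
    ultimately show ?thesis by simp
  qed
  have "B-lipschitz_on S \<psi>" using lip B by (auto intro!: lipschitz_onI simp: dist_norm)
  then have cS: "continuous_on S \<psi>" by (rule lipschitz_on_continuous_on)
  have "path \<gamma>" unfolding path_def \<gamma>_def
    by (rule continuous_on_compose2[OF cS]) (auto intro!: continuous_intros inS)
  moreover have "path_image \<gamma> \<subseteq> M" using im inS by (auto simp: path_image_def \<gamma>_def)
  moreover have "pathstart \<gamma> = \<psi> a" "pathfinish \<gamma> = \<psi> b" by (auto simp: pathstart_def pathfinish_def \<gamma>_def)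
  ultimately have "geodesic_dist M (\<psi> a) (\<psi> b) \<le> curve_length \<gamma>" by (intro geodesic_dist_le) auto
  also have "curve_length \<gamma> \<le> ereal (B * norm (b - a))"
  proof (rule curve_length_le)
    fix t :: "nat \<Rightarrow> real" and m assume t0: "t 0 = 0" and tm: "t m = 1" and mono: "\<forall>k<m. t k \<le> t (Suc k)"
    have t01: "t k \<in> {0..1}" if "k \<le> m" for k
      using partition_mono[OF mono, of 0 k] partition_mono[OF mono, of k m] that t0 tm by auto
    have "(\<Sum>k<m. norm (\<gamma> (t (Suc k)) - \<gamma> (t k))) \<le> (\<Sum>k<m. B * norm (b - a) * (t (Suc k) - t k))"
    proof (rule sum_mono)
      fix k assume "k \<in> {..<m}"
      then have k: "k < m" by simp
      have "norm (\<gamma> (t (Suc k)) - \<gamma> (t k)) \<le> B * norm ((a + t (Suc k) *\<^sub>R (b - a)) - (a + t k *\<^sub>R (b - a)))"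
        unfolding \<gamma>_def using k by (intro lip inS t01) auto
      also have "(a + t (Suc k) *\<^sub>R (b - a)) - (a + t k *\<^sub>R (b - a)) = (t (Suc k) - t k) *\<^sub>R (b - a)"
        by (simp add: algebra_simps)
      also have "B * norm ((t (Suc k) - t k) *\<^sub>R (b - a)) = B * norm (b - a) * (t (Suc k) - t k)"
        using mono k by simp
      finally show "norm (\<gamma> (t (Suc k)) - \<gamma> (t k)) \<le> B * norm (b - a) * (t (Suc k) - t k)" .
    qed
    also have "\<dots> = B * norm (b - a) * (\<Sum>k<m. t (Suc k) - t k)" by (simp add: sum_distrib_left)
    also have "(\<Sum>k<m. t (Suc k) - t k) = 1" using sum_lessThan_telescope[of t m] t0 tm by simp
    finally show "(\<Sum>k<m. norm (\<gamma> (t (Suc k)) - \<gamma> (t k))) \<le> B * norm (b - a)" by simp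
  qed
  finally show ?thesis .
qed

lemma exists_crossing:
  fixes P :: "nat \<Rightarrow> bool"
  assumes "P 0" "\<not> P m"
  shows "\<exists>p<m. P p \<and> \<not> P (Suc p)"
  using assms
proof (induction m)
  case (Suc m)
  show ?case
  proof (cases "P m")
    case True then show ?thesis using Suc.prems by auto
  next
    case False then show ?thesis using Suc by (meson less_SucI)
  qed
qed simp

lemma sum_split_nat:
  fixes f :: "nat \<Rightarrow> 'b::comm_monoid_add"
  shows "(\<Sum>k<a + q. f k) = (\<Sum>k<a. f k) + (\<Sum>l<q. f (a + l))"
  by (induction q) (auto simp: add.assoc)

lemma curve_length_join:
  assumes fs: "pathfinish \<gamma>1 = pathstart \<gamma>2"
  shows "curve_length (\<gamma>1 +++ \<gamma>2) \<le> curve_length \<gamma>1 + curve_length \<gamma>2"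
  unfolding curve_length_def[of "\<gamma>1 +++ \<gamma>2"]
proof (rule SUP_least, clarify)
  fix t :: "nat \<Rightarrow> real" and m
  assume t0: "t 0 = 0" and tm: "t m = 1" and mono: "\<forall>k<m. t k \<le> t (Suc k)"
  let ?g = "\<gamma>1 +++ \<gamma>2"
  define f where "f k = norm (?g (t (Suc k)) - ?g (t k))" for k
  obtain p where pm: "p < m" and tp: "t p \<le> 1/2" and tp1: "\<not> t (Suc p) \<le> 1/2"
    using exists_crossing[of "\<lambda>k. t k \<le> 1/2" m] t0 tm by auto
  have low: "t k \<le> 1/2" if "k \<le> p" for k
    using partition_mono[OF mono, of k p] that pm tp by auto
  have high: "t k > 1/2" if "Suc p \<le> k" "k \<le> m" for k
    using partition_mono[OF mono, of "Suc p" k] that tp1 by auto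
  define q where "q = m - Suc p"
  have mq: "m = Suc p + q" using pm by (simp add: q_def)
  define s where "s k = (if k \<le> p then 2 * t k else 1)" for k
  define u where "u l = (if l = 0 then 0 else 2 * t (p + l) - 1)" for l
  have S1: "ereal (\<Sum>k<Suc p. norm (\<gamma>1 (s (Suc k)) - \<gamma>1 (s k))) \<le> curve_length \<gamma>1"
  proof (rule curve_length_ge)
    show "s 0 = 0" using t0 by (simp add: s_def)
    show "s (Suc p) = 1" by (simp add: s_def)
    show "\<forall>k<Suc p. s k \<le> s (Suc k)"
    proof (intro allI impI)
      fix k assume k: "k < Suc p"
      show "s k \<le> s (Suc k)"
      proof (cases "k < p")
        case True then show ?thesis using mono pm by (auto simp: s_def)
      next
        case False then have "k = p" using k by simp
        then show ?thesis using tp by (auto simp: s_def)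
      qed
    qed
  qed
  have S2: "ereal (\<Sum>l<Suc q. norm (\<gamma>2 (u (Suc l)) - \<gamma>2 (u l))) \<le> curve_length \<gamma>2"
  proof (rule curve_length_ge)
    show "u 0 = 0" by (simp add: u_def)
    show "u (Suc q) = 1" using tm mq by (simp add: u_def)
    show "\<forall>l<Suc q. u l \<le> u (Suc l)"
    proof (intro allI impI)
      fix l assume l: "l < Suc q"
      show "u l \<le> u (Suc l)"
      proof (cases "l = 0")
        case True then show ?thesis using high[of "Suc p"] mq by (auto simp: u_def)
      next
        case False then show ?thesis using mono l mq by (auto simp: u_def)
      qed
    qed
  qed
  have A: "(\<Sum>k<p. f k) = (\<Sum>k<p. norm (\<gamma>1 (s (Suc k)) - \<gamma>1 (s k)))"
  proof (rule sum.cong)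
    fix k assume "k \<in> {..<p}"
    then have "t k \<le> 1/2" "t (Suc k) \<le> 1/2" using low[of k] low[of "Suc k"] by auto
    then show "f k = norm (\<gamma>1 (s (Suc k)) - \<gamma>1 (s k))" using \<open>k \<in> {..<p}\<close>
      by (simp add: f_def s_def joinpaths_def)
  qed simp
  have B: "(\<Sum>l<q. f (Suc p + l)) = (\<Sum>l<q. norm (\<gamma>2 (u (Suc (Suc l))) - \<gamma>2 (u (Suc l))))"
  proof (rule sum.cong)
    fix l assume "l \<in> {..<q}"
    then have "\<not> t (Suc p + l) \<le> 1/2" "\<not> t (Suc (Suc p + l)) \<le> 1/2"
      using high[of "Suc p + l"] high[of "Suc (Suc p + l)"] mq by auto
    then show "f (Suc p + l) = norm (\<gamma>2 (u (Suc (Suc l))) - \<gamma>2 (u (Suc l)))"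
      by (simp add: f_def u_def joinpaths_def)
  qed simp
  have C: "f p \<le> norm (\<gamma>1 (s (Suc p)) - \<gamma>1 (s p)) + norm (\<gamma>2 (u (Suc 0)) - \<gamma>2 (u 0))"
  proof -
    have "\<gamma>1 1 = \<gamma>2 0" using fs by (simp add: pathfinish_def pathstart_def)
    have "f p = norm (\<gamma>2 (2 * t (Suc p) - 1) - \<gamma>1 (2 * t p))"
      using tp tp1 by (simp add: f_def joinpaths_def)
    also have "\<dots> \<le> norm (\<gamma>1 1 - \<gamma>1 (2 * t p)) + norm (\<gamma>2 (2 * t (Suc p) - 1) - \<gamma>2 0)"
      using \<open>\<gamma>1 1 = \<gamma>2 0\<close> norm_triangle_ineq[of "\<gamma>1 1 - \<gamma>1 (2 * t p)" "\<gamma>2 (2 * t (Suc p) - 1) - \<gamma>2 0"]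
      by (simp add: algebra_simps)
    finally show ?thesis by (simp add: s_def u_def)
  qed
  have "(\<Sum>k<m. f k) = (\<Sum>k<p. f k) + f p + (\<Sum>l<q. f (Suc p + l))"
    unfolding mq sum_split_nat by simp
  also have "\<dots> \<le> (\<Sum>k<Suc p. norm (\<gamma>1 (s (Suc k)) - \<gamma>1 (s k))) + (\<Sum>l<Suc q. norm (\<gamma>2 (u (Suc l)) - \<gamma>2 (u l)))"
    unfolding A B sum.lessThan_Suc_shift[of _ q] using C by simp
  finally have "ereal (\<Sum>k<m. f k) \<le> ereal (\<Sum>k<Suc p. norm (\<gamma>1 (s (Suc k)) - \<gamma>1 (s k))) + ereal (\<Sum>l<Suc q. norm (\<gamma>2 (u (Suc l)) - \<gamma>2 (u l)))"
    by simp
  also have "\<dots> \<le> curve_length \<gamma>1 + curve_length \<gamma>2" using S1 S2 by (rule add_mono)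
  finally show "ereal (\<Sum>k<m. norm (?g (t (Suc k)) - ?g (t k))) \<le> curve_length \<gamma>1 + curve_length \<gamma>2"
    by (simp add: f_def)
qed

lemma geodesic_dist_triangle_less:
  assumes "geodesic_dist M x y < ereal a" "geodesic_dist M y z < ereal b"
  shows "geodesic_dist M x z < ereal (a + b)"
proof -
  obtain \<gamma>1 where g1: "path \<gamma>1" "path_image \<gamma>1 \<subseteq> M" "pathstart \<gamma>1 = x" "pathfinish \<gamma>1 = y"
    "curve_length \<gamma>1 < ereal a"
    using assms(1) unfolding geodesic_dist_def INF_less_iff by auto
  obtain \<gamma>2 where g2: "path \<gamma>2" "path_image \<gamma>2 \<subseteq> M" "pathstart \<gamma>2 = y" "pathfinish \<gamma>2 = z"
    "curve_length \<gamma>2 < ereal b"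
    using assms(2) unfolding geodesic_dist_def INF_less_iff by auto
  have "geodesic_dist M x z \<le> curve_length (\<gamma>1 +++ \<gamma>2)"
    using g1 g2 by (intro geodesic_dist_le) (auto simp: path_image_join)
  also have "\<dots> \<le> curve_length \<gamma>1 + curve_length \<gamma>2" using g1 g2 by (intro curve_length_join) auto
  also have "\<dots> < ereal a + ereal b"
    using g1(5) g2(5) curve_length_nonneg[of \<gamma>1] curve_length_nonneg[of \<gamma>2]
    by (intro ereal_add_strict_mono) auto
  finally show ?thesis by simp
qed

lemma geodesic_local:
  fixes M :: "'a::euclidean_space set"
  assumes sub: "is_submanifold M" and xM: "x \<in> M" and e: "e > 0"
  shows "\<exists>\<epsilon>>0. \<forall>x'\<in>M. dist x' x < \<epsilon> \<longrightarrow>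
           geodesic_dist M x x' < ereal e \<and> geodesic_dist M x' x < ereal e"
proof -
  obtain U V \<phi> \<psi> L where U: "open U" "x \<in> U" and V: "open V" and L: "subspace L"
    and im: "\<phi> ` U = V" and inv1: "\<forall>y\<in>U. \<psi> (\<phi> y) = y" and inv2: "\<forall>z\<in>V. \<phi> (\<psi> z) = z"
    and C1p: "C1_on U \<phi>" and C1q: "C1_on V \<psi>" and imL: "\<phi> ` (M \<inter> U) = V \<inter> L"
    using sub xM unfolding is_submanifold_def by metis
  obtain D\<phi> where D\<phi>: "\<forall>y\<in>U. (\<phi> has_derivative blinfun_apply (D\<phi> y)) (at y)"
    using C1p unfolding C1_on_def by blast
  obtain D\<psi> where D\<psi>: "\<forall>z\<in>V. (\<psi> has_derivative blinfun_apply (D\<psi> z)) (at z)"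
    and cD\<psi>: "continuous_on V D\<psi>"
    using C1q unfolding C1_on_def by blast
  define c where "c = \<phi> x"
  have cV: "c \<in> V" using im U by (auto simp: c_def)
  have cL: "c \<in> L" using imL xM U by (auto simp: c_def)
  have "continuous (at c) D\<psi>" using cD\<psi> V cV continuous_on_eq_continuous_at by blast
  then obtain R1 where R1: "R1 > 0" "\<forall>z. dist z c < R1 \<longrightarrow> dist (D\<psi> z) (D\<psi> c) < 1"
    unfolding continuous_at_eps_delta using zero_less_one by blast
  obtain R2 where R2: "R2 > 0" "ball c R2 \<subseteq> V" using V cV open_contains_ball by blast
  define R where "R = min R1 R2"
  have R: "R > 0" using R1 R2 by (simp add: R_def)
  define S where "S = ball c R \<inter> L"
  have convS: "convex S" unfolding S_def using L by (intro convex_Int convex_ball subspace_imp_convex)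
  define B where "B = norm (D\<psi> c) + 1"
  have B: "B > 0" by (simp add: B_def add_nonneg_pos)
  have lipb: "norm (\<psi> a - \<psi> b) \<le> B * norm (a - b)" if "a \<in> ball c R" "b \<in> ball c R" for a b
  proof (rule differentiable_bound[of "ball c R" \<psi> "\<lambda>z. blinfun_apply (D\<psi> z)"])
    show "convex (ball c R)" by simp
    fix z assume z: "z \<in> ball c R"
    then have zV: "z \<in> V" using R2 by (auto simp: R_def)
    then show "(\<psi> has_derivative blinfun_apply (D\<psi> z)) (at z within ball c R)"
      using D\<psi> by (auto intro: has_derivative_at_withinI)
    have "dist z c < R1" using z by (auto simp: R_def dist_commute)
    then have "dist (D\<psi> z) (D\<psi> c) < 1" using R1 by auto
    then have "norm (D\<psi> z) \<le> B" unfolding B_def dist_norm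
      using norm_triangle_ineq2[of "D\<psi> z" "D\<psi> c"] by linarith
    then show "onorm (blinfun_apply (D\<psi> z)) \<le> B" by (simp add: norm_blinfun.rep_eq)
  qed (use that in auto)
  have lip: "norm (\<psi> a - \<psi> b) \<le> B * norm (a - b)" if "a \<in> S" "b \<in> S" for a b
    using lipb that by (auto simp: S_def)
  have imS: "\<psi> ` S \<subseteq> M"
  proof
    fix y assume "y \<in> \<psi> ` S"
    then obtain z where z: "z \<in> S" "y = \<psi> z" by auto
    then have "z \<in> V \<inter> L" using R2 by (auto simp: S_def R_def)
    then obtain w where "w \<in> M \<inter> U" "z = \<phi> w" using imL by (metis imageE)
    then show "y \<in> M" using z inv1 by auto
  qed
  have "continuous (at x) \<phi>" using D\<phi> U has_derivative_continuous by blast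
  then obtain d1 where d1: "d1 > 0" "\<forall>x'. dist x' x < d1 \<longrightarrow> dist (\<phi> x') (\<phi> x) < min R (e / B)"
    unfolding continuous_at_eps_delta using R e B by (metis divide_pos_pos min_less_iff_conj)
  obtain d2 where d2: "d2 > 0" "ball x d2 \<subseteq> U" using U open_contains_ball by blast
  show ?thesis
  proof (intro exI[of _ "min d1 d2"] conjI ballI impI)
    show "min d1 d2 > 0" using d1 d2 by simp
    fix x' assume x'M: "x' \<in> M" and dx: "dist x' x < min d1 d2"
    then have x'U: "x' \<in> U" using d2 by (auto simp: dist_commute)
    have dphi: "dist (\<phi> x') c < min R (e / B)" using d1 dx by (auto simp: c_def)
    have "\<phi> x' \<in> V \<inter> L" using imL x'M x'U by blast
    then have px'S: "\<phi> x' \<in> S" using dphi by (auto simp: S_def dist_commute)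
    have cS: "c \<in> S" using R cL by (simp add: S_def)
    have psi_c: "\<psi> c = x" using inv1 U by (simp add: c_def)
    have psi_x': "\<psi> (\<phi> x') = x'" using inv1 x'U by simp
    have small: "B * norm (\<phi> x' - c) < e"
    proof -
      have "norm (\<phi> x' - c) < e / B" using dphi by (simp add: dist_norm)
      then show ?thesis using B by (simp add: field_simps)
    qed
    have "geodesic_dist M (\<psi> c) (\<psi> (\<phi> x')) \<le> ereal (B * norm (\<phi> x' - c))"
      using segment_length[OF convS lip _ imS cS px'S] B by simp
    then show "geodesic_dist M x x' < ereal e" using small psi_c psi_x' by (simp add: le_less_trans)
    have "geodesic_dist M (\<psi> (\<phi> x')) (\<psi> c) \<le> ereal (B * norm (c - \<phi> x'))"
      using segment_length[OF convS lip _ imS px'S cS] B by simp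
    then show "geodesic_dist M x' x < ereal e" using small psi_c psi_x'
      by (simp add: norm_minus_commute le_less_trans)
  qed
qed

lemma geodesic_usc:
  fixes M :: "'a::euclidean_space set"
  assumes sub: "is_submanifold M" and xM: "x \<in> M" and yM: "y \<in> M"
    and lt: "geodesic_dist M x y < r"
  shows "\<exists>\<epsilon>>0. \<forall>x'\<in>M. \<forall>y'\<in>M. dist x' x < \<epsilon> \<longrightarrow> dist y' y < \<epsilon> \<longrightarrow> geodesic_dist M x' y' < r"
proof -
  obtain a where a: "geodesic_dist M x y < ereal a" "ereal a < r" using ereal_dense2[OF lt] by blast
  obtain b where b: "ereal a < ereal b" "ereal b < r" using ereal_dense2[OF a(2)] by blast
  define e where "e = (b - a) / 2"
  have e: "e > 0" using b by (simp add: e_def)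
  obtain \<epsilon>1 where \<epsilon>1: "\<epsilon>1 > 0" "\<forall>x'\<in>M. dist x' x < \<epsilon>1 \<longrightarrow> geodesic_dist M x' x < ereal e"
    using geodesic_local[OF sub xM e] by blast
  obtain \<epsilon>2 where \<epsilon>2: "\<epsilon>2 > 0" "\<forall>y'\<in>M. dist y' y < \<epsilon>2 \<longrightarrow> geodesic_dist M y y' < ereal e"
    using geodesic_local[OF sub yM e] by blast
  show ?thesis
  proof (intro exI[of _ "min \<epsilon>1 \<epsilon>2"] conjI ballI impI)
    show "min \<epsilon>1 \<epsilon>2 > 0" using \<epsilon>1 \<epsilon>2 by simp
    fix x' y' assume "x' \<in> M" "y' \<in> M" "dist x' x < min \<epsilon>1 \<epsilon>2" "dist y' y < min \<epsilon>1 \<epsilon>2"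
    then have "geodesic_dist M x' x < ereal e" "geodesic_dist M y y' < ereal e" using \<epsilon>1 \<epsilon>2 by auto
    then have "geodesic_dist M x' y' < ereal (e + a + e)"
      using a(1) by (intro geodesic_dist_triangle_less) auto
    also have "e + a + e = b" by (simp add: e_def)
    finally show "geodesic_dist M x' y' < r" using b(2) by simp
  qed
qed

lemma geodesic_measurable:
  fixes M :: "'a::euclidean_space set" and \<mu> :: "'a measure"
  assumes sub: "is_submanifold M" and sets: "sets \<mu> = sets (restrict_space borel M)"
  shows "(\<lambda>p. geodesic_dist M (fst p) (snd p)) \<in> borel_measurable (\<mu> \<Otimes>\<^sub>M \<mu>)"
proof -
  have spm: "space \<mu> = M" using sets_eq_imp_space_eq[OF sets] by (simp add: space_restrict_space)
  have sp: "space (\<mu> \<Otimes>\<^sub>M \<mu>) = M \<times> M" by (simp add: space_pair_measure spm)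
  have idm: "(\<lambda>x. x) \<in> measurable \<mu> borel"
  proof -
    have "(\<lambda>x. x) \<in> measurable (restrict_space borel M) borel"
      by (rule measurable_restrict_space1[OF measurable_ident_sets[OF refl]])
    then show ?thesis unfolding measurable_cong_sets[OF sets refl] .
  qed
  have pm: "(\<lambda>p. (fst p, snd p)) \<in> measurable (\<mu> \<Otimes>\<^sub>M \<mu>) (borel \<Otimes>\<^sub>M borel)"
    by (intro measurable_Pair measurable_compose[OF measurable_fst idm] measurable_compose[OF measurable_snd idm])
  show ?thesis
    unfolding borel_measurable_ereal_iff_Iio
  proof
    fix r :: ereal
    define S where "S = {p \<in> M \<times> M. geodesic_dist M (fst p) (snd p) < r}"
    have "openin (top_of_set (M \<times> M)) S"
      unfolding openin_euclidean_subtopology_iff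
    proof (intro conjI ballI)
      show "S \<subseteq> M \<times> M" by (auto simp: S_def)
      fix p assume "p \<in> S"
      then obtain x y where p: "p = (x, y)" "x \<in> M" "y \<in> M" "geodesic_dist M x y < r"
        by (auto simp: S_def)
      obtain \<epsilon> where \<epsilon>: "\<epsilon> > 0" "\<forall>x'\<in>M. \<forall>y'\<in>M. dist x' x < \<epsilon> \<longrightarrow> dist y' y < \<epsilon> \<longrightarrow> geodesic_dist M x' y' < r"
        using geodesic_usc[OF sub p(2,3,4)] by blast
      show "\<exists>e>0. \<forall>x'\<in>M \<times> M. dist x' p < e \<longrightarrow> x' \<in> S"
      proof (intro exI[of _ \<epsilon>] conjI ballI impI)
        fix q assume q: "q \<in> M \<times> M" "dist q p < \<epsilon>"
        obtain x' y' where q': "q = (x', y')" by (cases q)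
        have "dist x' x \<le> dist q p" "dist y' y \<le> dist q p"
          using dist_fst_le[of q p] dist_snd_le[of q p] by (auto simp: p q')
        then show "q \<in> S" using q \<epsilon> by (auto simp: S_def q')
      qed (use \<epsilon> in simp)
    qed
    then obtain G where G: "open G" "S = M \<times> M \<inter> G" using openin_open by blast
    have "G \<in> sets (borel \<Otimes>\<^sub>M borel)" unfolding borel_prod using G(1) by simp
    then have "(\<lambda>p. (fst p, snd p)) -` G \<inter> space (\<mu> \<Otimes>\<^sub>M \<mu>) \<in> sets (\<mu> \<Otimes>\<^sub>M \<mu>)"
      using measurable_sets[OF pm] by blast
    moreover have "(\<lambda>p. (fst p, snd p)) -` G \<inter> space (\<mu> \<Otimes>\<^sub>M \<mu>) =
        (\<lambda>p. geodesic_dist M (fst p) (snd p)) -` {..<r} \<inter> space (\<mu> \<Otimes>\<^sub>M \<mu>)"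
      using G(2) unfolding sp S_def by auto
    ultimately show "(\<lambda>p. geodesic_dist M (fst p) (snd p)) -` {..<r} \<inter> space (\<mu> \<Otimes>\<^sub>M \<mu>) \<in> sets (\<mu> \<Otimes>\<^sub>M \<mu>)"
      by simp
  qed
qed

lemma nn_integral_two_valued:
  assumes "prob_space \<mu>" "C \<in> sets \<mu>" "0 \<le> a" "0 \<le> b"
  shows "(\<integral>\<^sup>+ z. ennreal (if z \<in> C then a else b) \<partial>\<mu>) = ennreal (a * measure \<mu> C + b * (1 - measure \<mu> C))"
proof -
  interpret prob_space \<mu> by fact
  have "(\<integral>\<^sup>+ z. ennreal (if z \<in> C then a else b) \<partial>\<mu>) =
        (\<integral>\<^sup>+ z. ennreal a * indicator C z + ennreal b * indicator (space \<mu> - C) z \<partial>\<mu>)"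
    by (rule nn_integral_cong) (auto simp: indicator_def)
  also have "\<dots> = ennreal a * emeasure \<mu> C + ennreal b * emeasure \<mu> (space \<mu> - C)"
    using assms(2) by (subst nn_integral_add) (auto simp: nn_integral_cmult_indicator)
  also have "emeasure \<mu> (space \<mu> - C) = ennreal (1 - measure \<mu> C)"
    using assms(2) prob_compl emeasure_eq_measure by simp
  also have "emeasure \<mu> C = ennreal (measure \<mu> C)" by (simp add: emeasure_eq_measure)
  finally show ?thesis using assms(3,4)
    by (simp add: ennreal_mult'[symmetric] ennreal_plus[symmetric] del: ennreal_plus)
qed

lemma markov_prod:
  fixes \<mu> :: "'a measure" and J :: "'i set"
  assumes \<mu>: "prob_space \<mu>" and C: "C \<in> sets \<mu>" and J: "finite J"
    and a: "0 \<le> a" and b: "0 \<le> b" and c: "0 \<le> c"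
    and P: "\<And>y. y \<in> space (PiM J (\<lambda>_. \<mu>)) \<Longrightarrow> P y \<Longrightarrow> 1 \<le> c * (\<Prod>k\<in>J. if y k \<in> C then a else b)"
  shows "(\<integral>\<^sup>+ y. indicator {y. P y} y \<partial>PiM J (\<lambda>_. \<mu>)) \<le>
          ennreal (c * (a * measure \<mu> C + b * (1 - measure \<mu> C)) ^ card J)"
proof -
  interpret ps: product_sigma_finite "\<lambda>_. \<mu>"
    by (simp add: product_sigma_finite_def \<mu> prob_space_imp_sigma_finite)
  define g where "g z = ennreal (if z \<in> C then a else b)" for z
  have gm[measurable]: "g \<in> borel_measurable \<mu>" unfolding g_def using C by measurable
  have "(\<integral>\<^sup>+ y. indicator {y. P y} y \<partial>PiM J (\<lambda>_. \<mu>)) \<le>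
        (\<integral>\<^sup>+ y. (\<Prod>k\<in>J. g (y k)) * ennreal c \<partial>PiM J (\<lambda>_. \<mu>))"
  proof (rule nn_integral_mono)
    fix y assume y: "y \<in> space (PiM J (\<lambda>_. \<mu>))"
    have eq: "(\<Prod>k\<in>J. g (y k)) * ennreal c = ennreal (c * (\<Prod>k\<in>J. if y k \<in> C then a else b))"
    proof -
      have "(\<Prod>k\<in>J. g (y k)) = ennreal (\<Prod>k\<in>J. if y k \<in> C then a else b)"
        unfolding g_def using a b by (intro prod_ennreal) auto
      then show ?thesis using c by (simp add: ennreal_mult'[symmetric] mult.commute prod_nonneg a b)
    qed
    show "indicator {y. P y} y \<le> (\<Prod>k\<in>J. g (y k)) * ennreal c"
      using P[OF y] unfolding eq by (auto simp: indicator_def)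
  qed
  also have "\<dots> = (\<integral>\<^sup>+ y. (\<Prod>k\<in>J. g (y k)) \<partial>PiM J (\<lambda>_. \<mu>)) * ennreal c"
    by (rule nn_integral_multc) measurable
  also have "(\<integral>\<^sup>+ y. (\<Prod>k\<in>J. g (y k)) \<partial>PiM J (\<lambda>_. \<mu>)) = (\<Prod>k\<in>J. integral\<^sup>N \<mu> g)"
    by (rule ps.product_nn_integral_prod[OF J]) simp
  also have "\<dots> = (integral\<^sup>N \<mu> g) ^ card J" by simp
  also have "integral\<^sup>N \<mu> g = ennreal (a * measure \<mu> C + b * (1 - measure \<mu> C))"
    unfolding g_def by (rule nn_integral_two_valued[OF \<mu> C a b])
  finally have *: "(\<integral>\<^sup>+ y. indicator {y. P y} y \<partial>PiM J (\<lambda>_. \<mu>)) \<le>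
     ennreal (a * measure \<mu> C + b * (1 - measure \<mu> C)) ^ card J * ennreal c" .
  have s: "0 \<le> a * measure \<mu> C + b * (1 - measure \<mu> C)"
    using a b prob_space.prob_le_1[OF \<mu>, of C] by (simp add: measure_nonneg)
  have "ennreal (a * measure \<mu> C + b * (1 - measure \<mu> C)) ^ card J * ennreal c =
        ennreal (c * (a * measure \<mu> C + b * (1 - measure \<mu> C)) ^ card J)"
    using s c by (simp add: ennreal_power ennreal_mult'[symmetric] mult.commute del: ennreal_plus)
  with * show ?thesis by simp
qed

lemma real_card_sum: "finite K \<Longrightarrow> real (card {k\<in>K. Q k}) = (\<Sum>k\<in>K. if Q k then 1 else 0)"
  by (simp add: sum.If_cases Int_def)

lemma meas_test:
  fixes \<mu> :: "'a measure" and Dp :: "'a \<times> 'a \<Rightarrow> ereal"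
  assumes \<mu>: "prob_space \<mu>" and Dm[measurable]: "Dp \<in> borel_measurable (\<mu> \<Otimes>\<^sub>M \<mu>)"
    and mC[measurable]: "mC \<in> borel_measurable (\<mu> \<Otimes>\<^sub>M \<mu>)"
    and i: "i < n" and j: "j < n"
  shows "{x \<in> space (PiM {..<n} (\<lambda>_. \<mu>)). real n * (3/2 * mC (x i, x j) + c0) <
     (\<Sum>k\<in>{..<n}. if Dp (x i, x k) \<le> Dp (x i, x j) then 1 else 0)} \<in> sets (PiM {..<n} (\<lambda>_. \<mu>))"
proof -
  have [measurable]: "(\<lambda>x. x i) \<in> measurable (Pi\<^sub>M {..<n} (\<lambda>_. \<mu>)) \<mu>"
     "(\<lambda>x. x j) \<in> measurable (Pi\<^sub>M {..<n} (\<lambda>_. \<mu>)) \<mu>"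
    using i j by (auto intro!: measurable_component_singleton)
  have [measurable]: "(\<lambda>w. \<Sum>k<n. if Dp (w i, w k) \<le> Dp (w i, w j) then 1 else (0::real))
     \<in> borel_measurable (Pi\<^sub>M {..<n} (\<lambda>_. \<mu>))"
  proof (rule borel_measurable_sum)
    fix k assume "k \<in> {..<n}"
    then have [measurable]: "(\<lambda>x. x k) \<in> measurable (Pi\<^sub>M {..<n} (\<lambda>_. \<mu>)) \<mu>"
      by (auto intro!: measurable_component_singleton)
    have [measurable]: "(\<lambda>x. Dp (x i, x k)) \<in> borel_measurable (Pi\<^sub>M {..<n} (\<lambda>_. \<mu>))" by measurable
    have [measurable]: "(\<lambda>x. Dp (x i, x j)) \<in> borel_measurable (Pi\<^sub>M {..<n} (\<lambda>_. \<mu>))" by measurable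
    have [measurable]: "Measurable.pred (Pi\<^sub>M {..<n} (\<lambda>_. \<mu>)) (\<lambda>x. Dp (x i, x k) \<le> Dp (x i, x j))"
      unfolding pred_def by (rule borel_measurable_le) measurable
    show "(\<lambda>w. if Dp (w i, w k) \<le> Dp (w i, w j) then 1 else (0::real)) \<in> borel_measurable (Pi\<^sub>M {..<n} (\<lambda>_. \<mu>))"
      by measurable
  qed
  show ?thesis by measurable
qed

lemma meas_test2:
  fixes \<mu> :: "'a measure" and Dp :: "'a \<times> 'a \<Rightarrow> ereal"
  assumes \<mu>: "prob_space \<mu>" and Dm[measurable]: "Dp \<in> borel_measurable (\<mu> \<Otimes>\<^sub>M \<mu>)"
  shows "(\<lambda>ab. measure \<mu> {z \<in> space \<mu>. Dp (fst ab, z) \<le> Dp ab}) \<in> borel_measurable (\<mu> \<Otimes>\<^sub>M \<mu>)"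
proof -
  interpret prob_space \<mu> by fact
  define Q where "Q = {abz \<in> space ((\<mu> \<Otimes>\<^sub>M \<mu>) \<Otimes>\<^sub>M \<mu>). Dp (fst (fst abz), snd abz) \<le> Dp (fst abz)}"
  have Q: "Q \<in> sets ((\<mu> \<Otimes>\<^sub>M \<mu>) \<Otimes>\<^sub>M \<mu>)" unfolding Q_def by measurable
  have "(\<lambda>ab. emeasure \<mu> (Pair ab -` Q)) \<in> borel_measurable (\<mu> \<Otimes>\<^sub>M \<mu>)"
    by (rule measurable_emeasure_Pair[OF Q])
  then have "(\<lambda>ab. enn2real (emeasure \<mu> (Pair ab -` Q))) \<in> borel_measurable (\<mu> \<Otimes>\<^sub>M \<mu>)"
    by measurable
  then show ?thesis
  proof (rule measurable_cong[THEN iffD1, rotated])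
    fix ab assume "ab \<in> space (\<mu> \<Otimes>\<^sub>M \<mu>)"
    then have "Pair ab -` Q = {z \<in> space \<mu>. Dp (fst ab, z) \<le> Dp ab}"
      by (auto simp: Q_def space_pair_measure)
    then show "enn2real (emeasure \<mu> (Pair ab -` Q)) = measure \<mu> {z \<in> space \<mu>. Dp (fst ab, z) \<le> Dp ab}"
      by (simp add: measure_def)
  qed
qed

lemma e_bounds: "exp (1::real) < 272/100" "27/10 < exp (1::real)"
  using e_less_272 apply simp
  using e_approx_32 by (simp add: abs_if split: if_splits)

lemma ln2_ge: "2/3 \<le> ln (2::real)"
proof -
  have "exp (2/3::real) ^ 3 = exp 2" by (simp add: exp_of_nat_mult[symmetric])
  also have "exp (2::real) = exp 1 ^ 2" by (simp add: exp_of_nat_mult[symmetric])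
  also have "\<dots> < (272/100) ^ 2" using e_bounds(1) by (intro power_strict_mono) auto
  also have "\<dots> < (2::real) ^ 3" by (simp add: eval_nat_numeral)
  finally have "exp (2/3::real) < 2" by (rule power_less_imp_less_base) simp
  then have "ln (exp (2/3::real)) < ln 2" by (subst ln_less_cancel_iff) auto
  then show ?thesis by simp
qed

lemma ln2_le: "ln (2::real) \<le> 3/4"
proof -
  have "(2::real) ^ 4 < (27/10) ^ 3" by (simp add: eval_nat_numeral)
  also have "\<dots> < exp 1 ^ 3" using e_bounds(2) by (intro power_strict_mono) auto
  also have "exp (1::real) ^ 3 = exp 3" by (simp add: exp_of_nat_mult[symmetric])
  also have "exp (3::real) = exp (3/4) ^ 4" by (simp add: exp_of_nat_mult[symmetric])
  finally have "2 < exp (3/4::real)" by (rule power_less_imp_less_base) simp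
  then have "ln 2 < ln (exp (3/4::real))" by (subst ln_less_cancel_iff) auto
  then show ?thesis by simp
qed

lemma Lg_ge:
  fixes n :: nat and p2 :: real
  assumes "0 < n" "0 < p2" "p2 \<le> 1/2"
  shows "2 \<le> ln (4 * real n ^ 2 / p2)"
proof -
  have "exp (2::real) = exp 1 ^ 2" by (simp add: exp_of_nat_mult[symmetric])
  also have "\<dots> < (272/100) ^ 2" using e_bounds(1) by (intro power_strict_mono) auto
  also have "\<dots> \<le> 8" by (simp add: eval_nat_numeral)
  also have "8 \<le> 4 * real n ^ 2 / p2"
  proof -
    have "1 \<le> real n ^ 2" using assms(1) by simp
    then have "8 * p2 \<le> 4 * real n ^ 2" using assms by linarith
    then show ?thesis using assms by (simp add: field_simps)
  qed
  finally show ?thesis using assms by (simp add: ln_ge_iff)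
qed

lemma AR1:
  fixes n p Lg :: real and k :: nat
  assumes n: "1 \<le> n" and p: "0 \<le> p" "p \<le> 1" and k: "real k \<le> n" and L: "2 \<le> Lg"
  shows "2 powr (-(n * (3/2 * p + 12 * Lg / n) - 2)) * (1 + p) ^ k \<le> exp (- Lg)"
proof -
  have "(1 + p) ^ k \<le> exp p ^ k" using p by (intro power_mono) (auto simp: exp_ge_add_one_self add.commute)
  also have "\<dots> = exp (k * p)" by (simp add: exp_of_nat_mult[symmetric])
  also have "\<dots> \<le> exp (n * p)" using k p by (simp add: mult_right_mono)
  finally have 1: "(1 + p) ^ k \<le> exp (n * p)" .
  have eq: "n * (3/2 * p + 12 * Lg / n) = 3/2 * n * p + 12 * Lg" using n by (simp add: field_simps)
  have "2 powr (-(n * (3/2 * p + 12 * Lg / n) - 2)) = exp (- ln 2 * (3/2 * n * p + 12 * Lg - 2))"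
    unfolding eq powr_def by (simp add: algebra_simps)
  moreover have "ln 2 * (3/2 * n * p + 12 * Lg - 2) \<ge> 2/3 * (3/2 * n * p + 12 * Lg - 2)"
  proof (rule mult_right_mono)
    have "0 \<le> n * p" using n p by simp
    then show "0 \<le> 3/2 * n * p + 12 * Lg - 2" using L by linarith
  qed (use ln2_ge in auto)
  ultimately have 2: "2 powr (-(n * (3/2 * p + 12 * Lg / n) - 2)) \<le> exp (- (n * p + 8 * Lg - 4/3))"
    by (simp add: algebra_simps)
  have "2 powr (-(n * (3/2 * p + 12 * Lg / n) - 2)) * (1 + p) ^ k \<le> exp (- (n * p + 8 * Lg - 4/3)) * exp (n * p)"
    using 1 2 p by (intro mult_mono) auto
  also have "\<dots> = exp (- (8 * Lg - 4/3))" by (simp add: exp_add[symmetric])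
  also have "\<dots> \<le> exp (- Lg)" using L by simp
  finally show ?thesis .
qed

lemma AR2:
  fixes n p Lg :: real and k :: nat
  assumes n: "1 \<le> n" and p: "0 \<le> p" "p \<le> 1" and k: "n - 2 \<le> real k" and L: "2 \<le> Lg"
  shows "2 powr (2 * n * (p - 12 * Lg / n) / 3) * (1 - p / 2) ^ k \<le> exp (- Lg)"
proof -
  have "(1 - p/2) ^ k \<le> exp (- p/2) ^ k" using p
    using exp_ge_add_one_self[of "-(p/2)"] by (intro power_mono) auto
  also have "\<dots> = exp (k * (- p/2))" by (simp add: exp_of_nat_mult[symmetric])
  also have "\<dots> \<le> exp (- (n - 2) * p / 2)" using mult_right_mono[OF k p(1)] by (simp add: algebra_simps)
  finally have 1: "(1 - p/2) ^ k \<le> exp (- (n - 2) * p / 2)" .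
  have eq: "2 * n * (p - 12 * Lg / n) / 3 = 2/3 * n * p - 8 * Lg" using n by (simp add: field_simps)
  define A where "A = 2/3 * n * p"
  have e1: "2 powr (2 * n * (p - 12 * Lg / n) / 3) = exp (ln 2 * A - ln 2 * (8 * Lg))"
    unfolding eq powr_def A_def by (simp add: algebra_simps)
  have e2: "ln 2 * A \<le> 3/4 * A"
    using ln2_le n p unfolding A_def by (intro mult_right_mono) auto
  have e3: "ln 2 * (8 * Lg) \<ge> 2/3 * (8 * Lg)"
    using ln2_ge L by (intro mult_right_mono) auto
  have "ln 2 * A - ln 2 * (8 * Lg) \<le> n * p / 2 - 16 / 3 * Lg"
    using e2 e3 unfolding A_def by linarith
  then have 2: "2 powr (2 * n * (p - 12 * Lg / n) / 3) \<le> exp (n * p / 2 - 16 / 3 * Lg)"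
    unfolding e1 by simp
  have "2 powr (2 * n * (p - 12 * Lg / n) / 3) * (1 - p / 2) ^ k \<le> exp (n * p / 2 - 16 / 3 * Lg) * exp (- (n - 2) * p / 2)"
    using 1 2 p by (intro mult_mono) auto
  also have "\<dots> = exp (p - 16 / 3 * Lg)" by (simp add: exp_add[symmetric] field_simps)
  also have "\<dots> \<le> exp (- Lg)" using L p by simp
  finally show ?thesis .
qed

lemma fold_bound:
  fixes \<mu> :: "'a measure" and n i j :: nat
  assumes \<mu>: "prob_space \<mu>" and i: "i < n" and j: "j < n"
    and B: "B \<in> sets (PiM {..<n} (\<lambda>_. \<mu>))"
    and inner: "\<And>x. x \<in> space (PiM {i,j} (\<lambda>_. \<mu>)) \<Longrightarrow>
       (\<integral>\<^sup>+ y. indicator B (merge {i,j} ({..<n}-{i,j}) (x,y)) \<partial>PiM ({..<n}-{i,j}) (\<lambda>_. \<mu>)) \<le> ennreal q"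
  shows "emeasure (PiM {..<n} (\<lambda>_. \<mu>)) B \<le> ennreal q"
proof -
  interpret ps: product_sigma_finite "\<lambda>_. \<mu>"
    by (simp add: product_sigma_finite_def \<mu> prob_space_imp_sigma_finite)
  have U: "{i,j} \<union> ({..<n}-{i,j}) = {..<n}" using i j by auto
  have pI: "prob_space (PiM {i,j} (\<lambda>_. \<mu>))" by (intro prob_space_PiM) (simp add: \<mu>)
  have "emeasure (PiM {..<n} (\<lambda>_. \<mu>)) B = (\<integral>\<^sup>+ x. indicator B x \<partial>PiM {..<n} (\<lambda>_. \<mu>))"
    using B by simp
  also have "\<dots> = (\<integral>\<^sup>+ x. indicator B x \<partial>PiM ({i,j} \<union> ({..<n}-{i,j})) (\<lambda>_. \<mu>))" unfolding U ..
  also have "\<dots> = (\<integral>\<^sup>+ x. (\<integral>\<^sup>+ y. indicator B (merge {i,j} ({..<n}-{i,j}) (x,y)) \<partial>PiM ({..<n}-{i,j}) (\<lambda>_. \<mu>)) \<partial>PiM {i,j} (\<lambda>_. \<mu>))"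
  proof (rule ps.product_nn_integral_fold)
    show "{i,j} \<inter> ({..<n}-{i,j}) = {}" by blast
    show "finite {i,j}" by simp
    show "finite ({..<n}-{i,j})" by simp
    show "indicator B \<in> borel_measurable (PiM ({i,j} \<union> ({..<n}-{i,j})) (\<lambda>_. \<mu>))"
      unfolding U using B by (rule borel_measurable_indicator)
  qed
  also have "\<dots> \<le> (\<integral>\<^sup>+ x. ennreal q \<partial>PiM {i,j} (\<lambda>_. \<mu>))"
    by (rule nn_integral_mono) (rule inner)
  also have "\<dots> = ennreal q" using prob_space.emeasure_space_1[OF pI] by simp
  finally show ?thesis .
qed

lemma card_two_bound:
  fixes n i j :: nat
  assumes "S \<subseteq> {i,j} \<union> T" "finite T"
  shows "real (card S) \<le> 2 + real (card T)"
proof -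
  have "card S \<le> card ({i,j} \<union> T)" using assms by (intro card_mono) auto
  also have "\<dots> \<le> card {i,j} + card T" by (rule card_Un_le)
  also have "card {i,j} \<le> 2" by (simp add: card_insert_if)
  finally show ?thesis by linarith
qed

lemma prod_if_two:
  assumes "finite J"
  shows "(\<Prod>k\<in>J. if Q k then (a::real) else 1) = a ^ card {k\<in>J. Q k}"
proof -
  have "(\<Prod>k\<in>J. if Q k then (a::real) else 1) = prod (\<lambda>_. a) (J \<inter> {k. Q k}) * prod (\<lambda>_. 1) (J \<inter> - {k. Q k})"
    by (rule prod.If_cases) fact
  also have "J \<inter> {k. Q k} = {k\<in>J. Q k}" by auto
  finally show ?thesis by simp
qed

lemma inner1:
  fixes \<mu> :: "'a measure" and Dp :: "'a \<times> 'a \<Rightarrow> ereal" and n i j :: nat and Lg c0 :: real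
  assumes \<mu>: "prob_space \<mu>" and Dm[measurable]: "Dp \<in> borel_measurable (\<mu> \<Otimes>\<^sub>M \<mu>)"
    and i: "i < n" and j: "j < n" and L: "2 \<le> Lg" and c0: "c0 = 12 * Lg / real n"
    and x: "x \<in> space (PiM {i,j} (\<lambda>_. \<mu>))"
  shows "(\<integral>\<^sup>+ y. indicator {x \<in> space (PiM {..<n} (\<lambda>_. \<mu>)).
             real n * (3/2 * measure \<mu> {z \<in> space \<mu>. Dp (x i, z) \<le> Dp (x i, x j)} + c0)
               < real (card {k\<in>{..<n}. Dp (x i, x k) \<le> Dp (x i, x j)})}
           (merge {i,j} ({..<n}-{i,j}) (x,y)) \<partial>PiM ({..<n}-{i,j}) (\<lambda>_. \<mu>)) \<le> ennreal (exp (- Lg))"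
    (is "(\<integral>\<^sup>+ y. indicator ?B (merge ?I ?J (x,y)) \<partial>_) \<le> _")
proof -
  interpret prob_space \<mu> by fact
  define a where "a = x i"
  define b where "b = x j"
  have a: "a \<in> space \<mu>" and b: "b \<in> space \<mu>" using x by (auto simp: a_def b_def space_PiM)
  have pa: "(\<lambda>z. (a, z)) \<in> measurable \<mu> (\<mu> \<Otimes>\<^sub>M \<mu>)"
    using a by (intro measurable_Pair measurable_const measurable_ident_sets) auto
  have m1: "(\<lambda>z. Dp (a, z)) \<in> borel_measurable \<mu>" by (rule measurable_compose[OF pa Dm])
  define C where "C = {z \<in> space \<mu>. Dp (a, z) \<le> Dp (a, b)}"
  have C: "C \<in> sets \<mu>" unfolding C_def by (rule borel_measurable_le[OF m1 borel_measurable_const])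
  define p where "p = measure \<mu> C"
  have p: "0 \<le> p" "p \<le> 1" by (auto simp: p_def)
  define t where "t = real n * (3/2 * p + c0) - 2"
  have fJ: "finite ?J" by simp
  have "(\<integral>\<^sup>+ y. indicator ?B (merge ?I ?J (x,y)) \<partial>PiM ?J (\<lambda>_. \<mu>)) \<le>
        (\<integral>\<^sup>+ y. indicator {y. t \<le> real (card {k\<in>?J. y k \<in> C})} y \<partial>PiM ?J (\<lambda>_. \<mu>))"
  proof (rule nn_integral_mono)
    fix y assume y: "y \<in> space (PiM ?J (\<lambda>_. \<mu>))"
    define x' where "x' = merge ?I ?J (x,y)"
    have x'i: "x' i = a" and x'j: "x' j = b" by (auto simp: x'_def a_def b_def)
    have x'k: "x' k = y k" if "k \<in> ?J" for k using that by (auto simp: x'_def)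
    show "indicator ?B (merge ?I ?J (x,y)) \<le> (indicator {y. t \<le> real (card {k\<in>?J. y k \<in> C})} y :: ennreal)"
    proof (cases "x' \<in> ?B")
      case True
      then have lt: "real n * (3/2 * p + c0) < real (card {k\<in>{..<n}. Dp (a, x' k) \<le> Dp (a, b)})"
        by (simp add: x'i x'j p_def C_def)
      have "{k\<in>{..<n}. Dp (a, x' k) \<le> Dp (a, b)} \<subseteq> {i,j} \<union> {k\<in>?J. y k \<in> C}"
      proof
        fix k assume k: "k \<in> {k\<in>{..<n}. Dp (a, x' k) \<le> Dp (a, b)}"
        show "k \<in> {i,j} \<union> {k\<in>?J. y k \<in> C}"
        proof (cases "k \<in> {i,j}")
          case False
          then have kJ: "k \<in> ?J" using k by auto
          then have "y k \<in> space \<mu>" using y by (auto simp: space_PiM)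
          then show ?thesis using k kJ x'k[OF kJ] by (auto simp: C_def)
        qed blast
      qed
      then have "real (card {k\<in>{..<n}. Dp (a, x' k) \<le> Dp (a, b)}) \<le> 2 + real (card {k\<in>?J. y k \<in> C})"
        by (rule card_two_bound) simp
      then have "t \<le> real (card {k\<in>?J. y k \<in> C})" using lt by (simp add: t_def)
      then show ?thesis using True by (simp add: x'_def)
    next
      case False
      then show ?thesis by (simp add: x'_def)
    qed
  qed
  also have "\<dots> \<le> ennreal (2 powr (-t) * (2 * measure \<mu> C + 1 * (1 - measure \<mu> C)) ^ card ?J)"
  proof (rule markov_prod[OF \<mu> C fJ])
    fix y assume "t \<le> real (card {k\<in>?J. y k \<in> C})"
    then have "1 \<le> 2 powr (real (card {k\<in>?J. y k \<in> C}) - t)" by (intro ge_one_powr_ge_zero) auto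
    also have "\<dots> = 2 powr (-t) * 2 ^ card {k\<in>?J. y k \<in> C}"
      by (simp add: powr_add[symmetric] powr_realpow[symmetric])
    also have "2 ^ card {k\<in>?J. y k \<in> C} = (\<Prod>k\<in>?J. if y k \<in> C then (2::real) else 1)"
      by (rule prod_if_two[symmetric]) simp
    finally show "1 \<le> 2 powr (-t) * (\<Prod>k\<in>?J. if y k \<in> C then (2::real) else 1)" .
  qed auto
  also have "\<dots> \<le> ennreal (exp (- Lg))"
  proof (rule ennreal_leI)
    have n1: "1 \<le> real n" using i by simp
    have "card ?J \<le> card {..<n}" by (rule card_mono) auto
    then have k: "real (card ?J) \<le> real n" by simp
    have "2 powr (-(real n * (3/2 * p + 12 * Lg / real n) - 2)) * (1 + p) ^ card ?J \<le> exp (- Lg)"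
      by (rule AR1[OF n1 p k L])
    then show "2 powr (-t) * (2 * measure \<mu> C + 1 * (1 - measure \<mu> C)) ^ card ?J \<le> exp (- Lg)"
      by (simp add: t_def c0 p_def[symmetric] algebra_simps)
  qed
  finally show ?thesis .
qed

lemma inner2:
  fixes \<mu> :: "'a measure" and Dp :: "'a \<times> 'a \<Rightarrow> ereal" and n i j :: nat and Lg c0 :: real
  assumes \<mu>: "prob_space \<mu>" and Dm[measurable]: "Dp \<in> borel_measurable (\<mu> \<Otimes>\<^sub>M \<mu>)"
    and i: "i < n" and j: "j < n" and L: "2 \<le> Lg" and c0: "c0 = 12 * Lg / real n"
    and x: "x \<in> space (PiM {i,j} (\<lambda>_. \<mu>))"
  shows "(\<integral>\<^sup>+ y. indicator {x \<in> space (PiM {..<n} (\<lambda>_. \<mu>)).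
             3/2 * real (card {k\<in>{..<n}. Dp (x i, x k) < Dp (x i, x j)}) / real n + c0
               < measure \<mu> {z \<in> space \<mu>. Dp (x i, z) < Dp (x i, x j)}}
           (merge {i,j} ({..<n}-{i,j}) (x,y)) \<partial>PiM ({..<n}-{i,j}) (\<lambda>_. \<mu>)) \<le> ennreal (exp (- Lg))"
    (is "(\<integral>\<^sup>+ y. indicator ?B (merge ?I ?J (x,y)) \<partial>_) \<le> _")
proof -
  interpret prob_space \<mu> by fact
  define a where "a = x i"
  define b where "b = x j"
  have a: "a \<in> space \<mu>" and b: "b \<in> space \<mu>" using x by (auto simp: a_def b_def space_PiM)
  have pa: "(\<lambda>z. (a, z)) \<in> measurable \<mu> (\<mu> \<Otimes>\<^sub>M \<mu>)"
    using a by (intro measurable_Pair measurable_const measurable_ident_sets) auto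
  have m1: "(\<lambda>z. Dp (a, z)) \<in> borel_measurable \<mu>" by (rule measurable_compose[OF pa Dm])
  define C where "C = {z \<in> space \<mu>. Dp (a, z) < Dp (a, b)}"
  have C: "C \<in> sets \<mu>" unfolding C_def by (rule borel_measurable_less[OF m1 borel_measurable_const])
  define p where "p = measure \<mu> C"
  have p: "0 \<le> p" "p \<le> 1" by (auto simp: p_def)
  define t where "t = 2 * real n * (p - c0) / 3"
  have fJ: "finite ?J" by simp
  have npos: "0 < real n" using i by simp
  have "(\<integral>\<^sup>+ y. indicator ?B (merge ?I ?J (x,y)) \<partial>PiM ?J (\<lambda>_. \<mu>)) \<le>
        (\<integral>\<^sup>+ y. indicator {y. real (card {k\<in>?J. y k \<in> C}) \<le> t} y \<partial>PiM ?J (\<lambda>_. \<mu>))"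
  proof (rule nn_integral_mono)
    fix y assume y: "y \<in> space (PiM ?J (\<lambda>_. \<mu>))"
    define x' where "x' = merge ?I ?J (x,y)"
    have x'i: "x' i = a" and x'j: "x' j = b" by (auto simp: x'_def a_def b_def)
    have x'k: "x' k = y k" if "k \<in> ?J" for k using that by (auto simp: x'_def)
    show "indicator ?B (merge ?I ?J (x,y)) \<le> (indicator {y. real (card {k\<in>?J. y k \<in> C}) \<le> t} y :: ennreal)"
    proof (cases "x' \<in> ?B")
      case True
      then have lt: "3/2 * real (card {k\<in>{..<n}. Dp (a, x' k) < Dp (a, b)}) / real n + c0 < p"
        by (simp add: x'i x'j p_def C_def)
      then have lt2: "real (card {k\<in>{..<n}. Dp (a, x' k) < Dp (a, b)}) < t"
        using npos by (simp add: t_def field_simps)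
      have "{k\<in>?J. y k \<in> C} \<subseteq> {k\<in>{..<n}. Dp (a, x' k) < Dp (a, b)}"
        using x'k by (auto simp: C_def)
      then have "card {k\<in>?J. y k \<in> C} \<le> card {k\<in>{..<n}. Dp (a, x' k) < Dp (a, b)}"
        by (intro card_mono) auto
      then have "real (card {k\<in>?J. y k \<in> C}) \<le> t" using lt2 by linarith
      then show ?thesis using True by (simp add: x'_def)
    next
      case False
      then show ?thesis by (simp add: x'_def)
    qed
  qed
  also have "\<dots> \<le> ennreal (2 powr t * (1/2 * measure \<mu> C + 1 * (1 - measure \<mu> C)) ^ card ?J)"
  proof (rule markov_prod[OF \<mu> C fJ])
    fix y assume "real (card {k\<in>?J. y k \<in> C}) \<le> t"
    then have "1 \<le> 2 powr (t - real (card {k\<in>?J. y k \<in> C}))" by (intro ge_one_powr_ge_zero) auto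
    also have "\<dots> = 2 powr t / 2 powr real (card {k\<in>?J. y k \<in> C})" by (rule powr_diff)
    also have "2 powr real (card {k\<in>?J. y k \<in> C}) = 2 ^ card {k\<in>?J. y k \<in> C}"
      by (rule powr_realpow) simp
    also have "2 powr t / 2 ^ card {k\<in>?J. y k \<in> C} = 2 powr t * (1/2) ^ card {k\<in>?J. y k \<in> C}"
      by (simp add: power_divide)
    also have "(1/2) ^ card {k\<in>?J. y k \<in> C} = (\<Prod>k\<in>?J. if y k \<in> C then (1/2::real) else 1)"
      by (rule prod_if_two[symmetric]) simp
    finally show "1 \<le> 2 powr t * (\<Prod>k\<in>?J. if y k \<in> C then (1/2::real) else 1)" .
  qed auto
  also have "\<dots> \<le> ennreal (exp (- Lg))"
  proof (rule ennreal_leI)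
    have n1: "1 \<le> real n" using i by simp
    have sub: "{i,j} \<subseteq> {..<n}" using i j by auto
    have "card ?J = card {..<n} - card {i,j}" by (rule card_Diff_subset) (use sub in auto)
    moreover have "card {i,j} \<le> 2" by (simp add: card_insert_if)
    moreover have "card {i,j} \<le> card {..<n}" using sub by (intro card_mono) auto
    ultimately have "n \<le> card ?J + 2" by simp
    then have k: "real n - 2 \<le> real (card ?J)" by linarith
    have "2 powr (2 * real n * (p - 12 * Lg / real n) / 3) * (1 - p / 2) ^ card ?J \<le> exp (- Lg)"
      by (rule AR2[OF n1 p k L])
    then show "2 powr t * (1/2 * measure \<mu> C + 1 * (1 - measure \<mu> C)) ^ card ?J \<le> exp (- Lg)"
      by (simp add: t_def c0 p_def[symmetric] algebra_simps)
  qed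
  finally show ?thesis .
qed

lemma meas_Bad1:
  fixes \<mu> :: "'a measure" and Dp :: "'a \<times> 'a \<Rightarrow> ereal" and n i j :: nat
  assumes \<mu>: "prob_space \<mu>" and Dm[measurable]: "Dp \<in> borel_measurable (\<mu> \<Otimes>\<^sub>M \<mu>)"
    and i: "i < n" and j: "j < n"
  shows "{x \<in> space (PiM {..<n} (\<lambda>_. \<mu>)).
             real n * (3/2 * measure \<mu> {z \<in> space \<mu>. Dp (x i, z) \<le> Dp (x i, x j)} + c0)
               < real (card {k\<in>{..<n}. Dp (x i, x k) \<le> Dp (x i, x j)})} \<in> sets (PiM {..<n} (\<lambda>_. \<mu>))"
proof -
  define mC where "mC ab = measure \<mu> {z \<in> space \<mu>. Dp (fst ab, z) \<le> Dp ab}" for ab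
  have [measurable]: "mC \<in> borel_measurable (\<mu> \<Otimes>\<^sub>M \<mu>)"
    unfolding mC_def by (rule meas_test2[OF \<mu> Dm])
  have "{x \<in> space (PiM {..<n} (\<lambda>_. \<mu>)).
             real n * (3/2 * measure \<mu> {z \<in> space \<mu>. Dp (x i, z) \<le> Dp (x i, x j)} + c0)
               < real (card {k\<in>{..<n}. Dp (x i, x k) \<le> Dp (x i, x j)})} =
        {x \<in> space (PiM {..<n} (\<lambda>_. \<mu>)). real n * (3/2 * mC (x i, x j) + c0) <
          (\<Sum>k\<in>{..<n}. if Dp (x i, x k) \<le> Dp (x i, x j) then 1 else 0)}"
    unfolding real_card_sum[OF finite_lessThan] by (simp add: mC_def)
  also have "\<dots> \<in> sets (PiM {..<n} (\<lambda>_. \<mu>))"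
    by (rule meas_test[OF \<mu> Dm _ i j]) measurable
  finally show ?thesis .
qed

lemma meas_test2':
  fixes \<mu> :: "'a measure" and Dp :: "'a \<times> 'a \<Rightarrow> ereal"
  assumes \<mu>: "prob_space \<mu>" and Dm[measurable]: "Dp \<in> borel_measurable (\<mu> \<Otimes>\<^sub>M \<mu>)"
  shows "(\<lambda>ab. measure \<mu> {z \<in> space \<mu>. Dp (fst ab, z) < Dp ab}) \<in> borel_measurable (\<mu> \<Otimes>\<^sub>M \<mu>)"
proof -
  interpret prob_space \<mu> by fact
  define Q where "Q = {abz \<in> space ((\<mu> \<Otimes>\<^sub>M \<mu>) \<Otimes>\<^sub>M \<mu>). Dp (fst (fst abz), snd abz) < Dp (fst abz)}"
  have Q: "Q \<in> sets ((\<mu> \<Otimes>\<^sub>M \<mu>) \<Otimes>\<^sub>M \<mu>)" unfolding Q_def by measurable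
  have "(\<lambda>ab. emeasure \<mu> (Pair ab -` Q)) \<in> borel_measurable (\<mu> \<Otimes>\<^sub>M \<mu>)"
    by (rule measurable_emeasure_Pair[OF Q])
  then have "(\<lambda>ab. enn2real (emeasure \<mu> (Pair ab -` Q))) \<in> borel_measurable (\<mu> \<Otimes>\<^sub>M \<mu>)"
    by measurable
  then show ?thesis
  proof (rule measurable_cong[THEN iffD1, rotated])
    fix ab assume "ab \<in> space (\<mu> \<Otimes>\<^sub>M \<mu>)"
    then have "Pair ab -` Q = {z \<in> space \<mu>. Dp (fst ab, z) < Dp ab}"
      by (auto simp: Q_def space_pair_measure)
    then show "enn2real (emeasure \<mu> (Pair ab -` Q)) = measure \<mu> {z \<in> space \<mu>. Dp (fst ab, z) < Dp ab}"
      by (simp add: measure_def)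
  qed
qed

lemma meas_Bad2:
  fixes \<mu> :: "'a measure" and Dp :: "'a \<times> 'a \<Rightarrow> ereal" and n i j :: nat
  assumes \<mu>: "prob_space \<mu>" and Dm[measurable]: "Dp \<in> borel_measurable (\<mu> \<Otimes>\<^sub>M \<mu>)"
    and i: "i < n" and j: "j < n"
  shows "{x \<in> space (PiM {..<n} (\<lambda>_. \<mu>)).
             3/2 * real (card {k\<in>{..<n}. Dp (x i, x k) < Dp (x i, x j)}) / real n + c0
               < measure \<mu> {z \<in> space \<mu>. Dp (x i, z) < Dp (x i, x j)}} \<in> sets (PiM {..<n} (\<lambda>_. \<mu>))"
proof -
  define mC where "mC ab = measure \<mu> {z \<in> space \<mu>. Dp (fst ab, z) < Dp ab}" for ab
  have [measurable]: "mC \<in> borel_measurable (\<mu> \<Otimes>\<^sub>M \<mu>)"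
    unfolding mC_def by (rule meas_test2'[OF \<mu> Dm])
  have [measurable]: "(\<lambda>x. x i) \<in> measurable (Pi\<^sub>M {..<n} (\<lambda>_. \<mu>)) \<mu>"
     "(\<lambda>x. x j) \<in> measurable (Pi\<^sub>M {..<n} (\<lambda>_. \<mu>)) \<mu>"
    using i j by (auto intro!: measurable_component_singleton)
  have [measurable]: "(\<lambda>w. \<Sum>k<n. if Dp (w i, w k) < Dp (w i, w j) then 1 else (0::real))
     \<in> borel_measurable (Pi\<^sub>M {..<n} (\<lambda>_. \<mu>))"
  proof (rule borel_measurable_sum)
    fix k assume "k \<in> {..<n}"
    then have [measurable]: "(\<lambda>x. x k) \<in> measurable (Pi\<^sub>M {..<n} (\<lambda>_. \<mu>)) \<mu>"
      by (auto intro!: measurable_component_singleton)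
    have [measurable]: "Measurable.pred (Pi\<^sub>M {..<n} (\<lambda>_. \<mu>)) (\<lambda>x. Dp (x i, x k) < Dp (x i, x j))"
      unfolding pred_def by (rule borel_measurable_less) measurable
    show "(\<lambda>w. if Dp (w i, w k) < Dp (w i, w j) then 1 else (0::real)) \<in> borel_measurable (Pi\<^sub>M {..<n} (\<lambda>_. \<mu>))"
      by measurable
  qed
  have "{x \<in> space (PiM {..<n} (\<lambda>_. \<mu>)).
             3/2 * real (card {k\<in>{..<n}. Dp (x i, x k) < Dp (x i, x j)}) / real n + c0
               < measure \<mu> {z \<in> space \<mu>. Dp (x i, z) < Dp (x i, x j)}} =
        {x \<in> space (PiM {..<n} (\<lambda>_. \<mu>)). 3/2 * (\<Sum>k<n. if Dp (x i, x k) < Dp (x i, x j) then 1 else (0::real)) / real n + c0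
          < mC (x i, x j)}"
    unfolding real_card_sum[OF finite_lessThan] by (simp add: mC_def)
  also have "\<dots> \<in> sets (PiM {..<n} (\<lambda>_. \<mu>))" by measurable
  finally show ?thesis .
qed

lemma exists_max_in:
  fixes f :: "nat \<Rightarrow> ereal"
  assumes "finite K" "K \<noteq> {}"
  shows "\<exists>j\<in>K. \<forall>k\<in>K. f k \<le> f j"
proof -
  have "Max (f ` K) \<in> f ` K" using assms by simp
  then obtain j where j: "j \<in> K" "f j = Max (f ` K)" by auto
  have "\<forall>k\<in>K. f k \<le> f j" unfolding j(2) using assms by simp
  then show ?thesis using j(1) by blast
qed

lemma exists_min_in:
  fixes f :: "nat \<Rightarrow> ereal"
  assumes "finite K" "K \<noteq> {}"
  shows "\<exists>j\<in>K. \<forall>k\<in>K. f j \<le> f k"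
proof -
  have "Min (f ` K) \<in> f ` K" using assms by simp
  then obtain j where j: "j \<in> K" "f j = Min (f ` K)" by auto
  have "\<forall>k\<in>K. f j \<le> f k" unfolding j(2) using assms by simp
  then show ?thesis using j(1) by blast
qed

lemma main_abstract:
  fixes \<mu> :: "'a measure" and P :: "'w measure"
    and X :: "nat \<Rightarrow> 'w \<Rightarrow> 'a" and n :: nat and p2 :: real and Dp :: "'a \<times> 'a \<Rightarrow> ereal"
  assumes \<mu>: "prob_space \<mu>" and P: "prob_space P"
    and p2: "0 < p2" "p2 \<le> 1/2" and n: "0 < n"
    and Xm: "\<And>j. j < n \<Longrightarrow> X j \<in> measurable P \<mu>"
    and Xd: "\<And>j. j < n \<Longrightarrow> distr P \<mu> (X j) = \<mu>"
    and ind: "prob_space.indep_vars P (\<lambda>_. \<mu>) X {..<n}"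
    and Dm[measurable]: "Dp \<in> borel_measurable (\<mu> \<Otimes>\<^sub>M \<mu>)"
  shows "let \<delta>2 = 4 / real n * ln (4 * real n ^ 2 / p2) in
    \<exists>A \<in> sets P. measure P A \<ge> 1 - p2 \<and>
      (\<forall>\<omega>\<in>A. \<forall>i<n. \<forall>r>0.
         empirical n (\<lambda>j. X j \<omega>) {y \<in> space \<mu>. Dp (X i \<omega>, y) < ereal r}
           \<le> 3/2 * measure \<mu> {y \<in> space \<mu>. Dp (X i \<omega>, y) < ereal r} + 3 * \<delta>2
       \<and> measure \<mu> {y \<in> space \<mu>. Dp (X i \<omega>, y) < ereal r}
           \<le> 3/2 * empirical n (\<lambda>j. X j \<omega>) {y \<in> space \<mu>. Dp (X i \<omega>, y) < ereal r} + 3 * \<delta>2)"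
proof -
  interpret mu: prob_space \<mu> by fact
  interpret P: prob_space P by fact
  define Lg where "Lg = ln (4 * real n ^ 2 / p2)"
  define \<delta>2 where "\<delta>2 = 4 / real n * Lg"
  define c0 where "c0 = 12 * Lg / real n"
  have L: "2 \<le> Lg" unfolding Lg_def using Lg_ge[OF n p2] .
  have npos: "0 < real n" using n by simp
  have c0\<delta>: "c0 = 3 * \<delta>2" by (simp add: c0_def \<delta>2_def)
  have c0pos: "0 \<le> c0" using L npos by (simp add: c0_def)
  define \<Omega> where "\<Omega> = PiM {..<n} (\<lambda>_. \<mu>)"
  interpret Om: prob_space \<Omega> unfolding \<Omega>_def by (intro prob_space_PiM) (simp add: \<mu>)
  define B1 where "B1 i j = {x \<in> space \<Omega>.
             real n * (3/2 * measure \<mu> {z \<in> space \<mu>. Dp (x i, z) \<le> Dp (x i, x j)} + c0)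
               < real (card {k\<in>{..<n}. Dp (x i, x k) \<le> Dp (x i, x j)})}" for i j
  define B2 where "B2 i j = {x \<in> space \<Omega>.
             3/2 * real (card {k\<in>{..<n}. Dp (x i, x k) < Dp (x i, x j)}) / real n + c0
               < measure \<mu> {z \<in> space \<mu>. Dp (x i, z) < Dp (x i, x j)}}" for i j
  have B1s: "B1 i j \<in> sets \<Omega>" if "i < n" "j < n" for i j
    unfolding B1_def \<Omega>_def by (rule meas_Bad1[OF \<mu> Dm that])
  have B2s: "B2 i j \<in> sets \<Omega>" if "i < n" "j < n" for i j
    unfolding B2_def \<Omega>_def by (rule meas_Bad2[OF \<mu> Dm that])
  have B1m: "measure \<Omega> (B1 i j) \<le> exp (- Lg)" if ij: "i < n" "j < n" for i j
  proof -
    have "emeasure \<Omega> (B1 i j) \<le> ennreal (exp (- Lg))"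
      unfolding \<Omega>_def
    proof (rule fold_bound[OF \<mu> ij])
      show "B1 i j \<in> sets (PiM {..<n} (\<lambda>_. \<mu>))" using B1s[OF ij] by (simp add: \<Omega>_def)
      fix x assume "x \<in> space (PiM {i,j} (\<lambda>_. \<mu>))"
      then show "(\<integral>\<^sup>+ y. indicator (B1 i j) (merge {i,j} ({..<n}-{i,j}) (x,y)) \<partial>PiM ({..<n}-{i,j}) (\<lambda>_. \<mu>)) \<le> ennreal (exp (- Lg))"
        unfolding B1_def \<Omega>_def by (rule inner1[OF \<mu> Dm ij L c0_def])
    qed
    then show ?thesis by (simp add: Om.emeasure_eq_measure)
  qed
  have B2m: "measure \<Omega> (B2 i j) \<le> exp (- Lg)" if ij: "i < n" "j < n" for i j
  proof -
    have "emeasure \<Omega> (B2 i j) \<le> ennreal (exp (- Lg))"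
      unfolding \<Omega>_def
    proof (rule fold_bound[OF \<mu> ij])
      show "B2 i j \<in> sets (PiM {..<n} (\<lambda>_. \<mu>))" using B2s[OF ij] by (simp add: \<Omega>_def)
      fix x assume "x \<in> space (PiM {i,j} (\<lambda>_. \<mu>))"
      then show "(\<integral>\<^sup>+ y. indicator (B2 i j) (merge {i,j} ({..<n}-{i,j}) (x,y)) \<partial>PiM ({..<n}-{i,j}) (\<lambda>_. \<mu>)) \<le> ennreal (exp (- Lg))"
        unfolding B2_def \<Omega>_def by (rule inner2[OF \<mu> Dm ij L c0_def])
    qed
    then show ?thesis by (simp add: Om.emeasure_eq_measure)
  qed
  define Bad where "Bad = (\<Union>i\<in>{..<n}. \<Union>j\<in>{..<n}. B1 i j \<union> B2 i j)"
  have Bads: "Bad \<in> sets \<Omega>" unfolding Bad_def using B1s B2s by auto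
  have "measure \<Omega> Bad \<le> (\<Sum>i\<in>{..<n}. measure \<Omega> (\<Union>j\<in>{..<n}. B1 i j \<union> B2 i j))"
    unfolding Bad_def by (rule Om.finite_measure_subadditive_finite) (use B1s B2s in auto)
  also have "\<dots> \<le> (\<Sum>i\<in>{..<n}. \<Sum>j\<in>{..<n}. measure \<Omega> (B1 i j \<union> B2 i j))"
    by (intro sum_mono Om.finite_measure_subadditive_finite) (use B1s B2s in auto)
  also have "\<dots> \<le> (\<Sum>i\<in>{..<n}. \<Sum>j\<in>{..<n}. 2 * exp (- Lg))"
  proof (intro sum_mono)
    fix i j assume "i \<in> {..<n}" "j \<in> {..<n}"
    then have ij: "i < n" "j < n" by auto
    have "measure \<Omega> (B1 i j \<union> B2 i j) \<le> measure \<Omega> (B1 i j) + measure \<Omega> (B2 i j)"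
      using B1s[OF ij] B2s[OF ij] by (rule measure_Un_le)
    then show "measure \<Omega> (B1 i j \<union> B2 i j) \<le> 2 * exp (- Lg)" using B1m[OF ij] B2m[OF ij] by simp
  qed
  also have "\<dots> = real n ^ 2 * 2 * exp (- Lg)" by (simp add: power2_eq_square)
  also have "exp (- Lg) = p2 / (4 * real n ^ 2)"
    using p2 npos by (simp add: Lg_def exp_minus)
  also have "real n ^ 2 * 2 * (p2 / (4 * real n ^ 2)) = p2 / 2" using npos by (simp add: field_simps)
  finally have Badm: "measure \<Omega> Bad \<le> p2 / 2" .
  define F where "F \<omega> = (\<lambda>k\<in>{..<n}. X k \<omega>)" for \<omega>
  have Fm: "F \<in> measurable P \<Omega>" unfolding F_def \<Omega>_def by (rule measurable_restrict) (use Xm in auto)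
  have "distr P \<Omega> F = (\<Pi>\<^sub>M i\<in>{..<n}. distr P \<mu> (X i))"
    unfolding \<Omega>_def F_def
    using P.indep_vars_iff_distr_eq_PiM'[where I="{..<n}" and M'="\<lambda>_. \<mu>" and X=X] n Xm ind by auto
  also have "\<dots> = \<Omega>" unfolding \<Omega>_def by (rule PiM_cong) (auto simp: Xd)
  finally have Fd: "distr P \<Omega> F = \<Omega>" .
  define A where "A = space P - (F -` Bad \<inter> space P)"
  have FBs: "F -` Bad \<inter> space P \<in> sets P" using Fm Bads by (rule measurable_sets)
  have As: "A \<in> sets P" unfolding A_def using FBs by auto
  have "measure P (F -` Bad \<inter> space P) = measure \<Omega> Bad"
    using measure_distr[OF Fm Bads] Fd by simp
  then have mA: "measure P A \<ge> 1 - p2"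
    using P.prob_compl[OF FBs] Badm p2 unfolding A_def by simp
  show ?thesis
    unfolding Let_def \<delta>2_def[symmetric] Lg_def[symmetric]
  proof (intro bexI[OF _ As] conjI mA ballI allI impI)
    fix \<omega> i and r :: real assume \<omega>A: "\<omega> \<in> A" and i: "i < n" and r: "0 < r"
    have \<omega>P: "\<omega> \<in> space P" using \<omega>A by (simp add: A_def)
    have Xsp: "X k \<omega> \<in> space \<mu>" if "k < n" for k using Xm[OF that] \<omega>P by (auto simp: measurable_def)
    define x where "x = F \<omega>"
    have xk: "x k = X k \<omega>" if "k < n" for k using that by (simp add: x_def F_def)
    have xsp: "x \<in> space \<Omega>" using Fm \<omega>P by (auto simp: x_def measurable_def)
    have notB: "x \<notin> B1 i j" "x \<notin> B2 i j" if "j < n" for j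
      using \<omega>A i that by (auto simp: A_def Bad_def x_def)
    define a where "a = X i \<omega>"
    have a: "a \<in> space \<mu>" using Xsp[OF i] by (simp add: a_def)
    have pa: "(\<lambda>z. (a, z)) \<in> measurable \<mu> (\<mu> \<Otimes>\<^sub>M \<mu>)"
      using a by (intro measurable_Pair measurable_const measurable_ident_sets) auto
    have m1: "(\<lambda>z. Dp (a, z)) \<in> borel_measurable \<mu>" by (rule measurable_compose[OF pa Dm])
    have setsLe: "{z \<in> space \<mu>. Dp (a, z) \<le> c} \<in> sets \<mu>" for c
      by (rule borel_measurable_le[OF m1 borel_measurable_const])
    have setsLt: "{z \<in> space \<mu>. Dp (a, z) < c} \<in> sets \<mu>" for c
      by (rule borel_measurable_less[OF m1 borel_measurable_const])
    define W where "W = {y \<in> space \<mu>. Dp (a, y) < ereal r}"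
    have Ws: "W \<in> sets \<mu>" unfolding W_def by (rule setsLt)
    define f where "f k = Dp (a, X k \<omega>)" for k
    define K where "K = {k\<in>{..<n}. f k < ereal r}"
    have emp: "empirical n (\<lambda>j. X j \<omega>) W = real (card K) / real n"
      unfolding empirical_def K_def W_def f_def using Xsp by (intro arg_cong2[where f="(/)"] refl arg_cong[where f="\<lambda>S. real (card S)"]) auto
    have xi: "x i = a" using xk[OF i] by (simp add: a_def)
    show "empirical n (\<lambda>j. X j \<omega>) {y \<in> space \<mu>. Dp (X i \<omega>, y) < ereal r}
           \<le> 3/2 * measure \<mu> {y \<in> space \<mu>. Dp (X i \<omega>, y) < ereal r} + 3 * \<delta>2"
      unfolding a_def[symmetric] W_def[symmetric] emp c0\<delta>[symmetric]
    proof (cases "K = {}")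
      case True
      then show "real (card K) / real n \<le> 3/2 * measure \<mu> W + c0" using c0pos by simp
    next
      case False
      obtain j where jK: "j \<in> K" and jmax: "\<forall>k\<in>K. f k \<le> f j"
        using exists_max_in[of K f] False by (auto simp: K_def)
      have j: "j < n" using jK by (simp add: K_def)
      have xj: "x j = X j \<omega>" using xk[OF j] .
      have eqK: "{k\<in>{..<n}. Dp (x i, x k) \<le> Dp (x i, x j)} = K"
        using jmax jK xk xi xj by (auto simp: K_def f_def intro: le_less_trans)
      have "\<not> real n * (3/2 * measure \<mu> {z \<in> space \<mu>. Dp (x i, z) \<le> Dp (x i, x j)} + c0) < real (card K)"
        using notB(1)[OF j] xsp eqK by (simp add: B1_def)
      moreover have "measure \<mu> {z \<in> space \<mu>. Dp (x i, z) \<le> Dp (x i, x j)} \<le> measure \<mu> W"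
      proof (rule mu.finite_measure_mono[OF _ Ws])
        show "{z \<in> space \<mu>. Dp (x i, z) \<le> Dp (x i, x j)} \<subseteq> W"
          using jK xi xj by (auto simp: W_def K_def f_def intro: le_less_trans)
      qed
      ultimately have "real (card K) \<le> real n * (3/2 * measure \<mu> W + c0)"
      proof -
        assume a1: "\<not> real n * (3/2 * measure \<mu> {z \<in> space \<mu>. Dp (x i, z) \<le> Dp (x i, x j)} + c0) < real (card K)"
          and a2: "measure \<mu> {z \<in> space \<mu>. Dp (x i, z) \<le> Dp (x i, x j)} \<le> measure \<mu> W"
        have "real n * (3/2 * measure \<mu> {z \<in> space \<mu>. Dp (x i, z) \<le> Dp (x i, x j)} + c0)
              \<le> real n * (3/2 * measure \<mu> W + c0)" using a2 npos by (intro mult_left_mono) auto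
        then show ?thesis using a1 by linarith
      qed
      then show "real (card K) / real n \<le> 3/2 * measure \<mu> W + c0"
        using npos by (simp add: field_simps)
    qed
    show "measure \<mu> {y \<in> space \<mu>. Dp (X i \<omega>, y) < ereal r}
           \<le> 3/2 * empirical n (\<lambda>j. X j \<omega>) {y \<in> space \<mu>. Dp (X i \<omega>, y) < ereal r} + 3 * \<delta>2"
      unfolding a_def[symmetric] W_def[symmetric] emp c0\<delta>[symmetric]
    proof (cases "{k\<in>{..<n}. \<not> f k < ereal r} = {}")
      case True
      then have "K = {..<n}" by (auto simp: K_def)
      then have "real (card K) / real n = 1" using npos by simp
      moreover have "measure \<mu> W \<le> 1" by simp
      ultimately show "measure \<mu> W \<le> 3/2 * (real (card K) / real n) + c0" using c0pos by linarith
    next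
      case False
      obtain j where jG: "j \<in> {k\<in>{..<n}. \<not> f k < ereal r}"
        and jmin: "\<forall>k\<in>{k\<in>{..<n}. \<not> f k < ereal r}. f j \<le> f k"
        using exists_min_in[of "{k\<in>{..<n}. \<not> f k < ereal r}" f] False by auto
      have j: "j < n" using jG by simp
      have xj: "x j = X j \<omega>" using xk[OF j] .
      have eqK: "{k\<in>{..<n}. Dp (x i, x k) < Dp (x i, x j)} = K"
      proof (intro set_eqI iffI)
        fix k assume k: "k \<in> {k\<in>{..<n}. Dp (x i, x k) < Dp (x i, x j)}"
        then have "f k < f j" using xk xi xj by (auto simp: f_def)
        then show "k \<in> K" using jmin k by (auto simp: K_def not_less)
      next
        fix k assume k: "k \<in> K"
        then have "f k < f j" using jG by (auto simp: K_def not_less intro: less_le_trans)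
        then show "k \<in> {k\<in>{..<n}. Dp (x i, x k) < Dp (x i, x j)}" using k xk xi xj by (auto simp: f_def K_def)
      qed
      have "\<not> 3/2 * real (card K) / real n + c0 < measure \<mu> {z \<in> space \<mu>. Dp (x i, z) < Dp (x i, x j)}"
        using notB(2)[OF j] xsp eqK by (simp add: B2_def)
      moreover have "measure \<mu> W \<le> measure \<mu> {z \<in> space \<mu>. Dp (x i, z) < Dp (x i, x j)}"
      proof (rule mu.finite_measure_mono)
        show "W \<subseteq> {z \<in> space \<mu>. Dp (x i, z) < Dp (x i, x j)}"
          using jG xi xj by (auto simp: W_def f_def not_less intro: less_le_trans)
        show "{z \<in> space \<mu>. Dp (x i, z) < Dp (x i, x j)} \<in> sets \<mu>" unfolding xi by (rule setsLt)
      qed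
      ultimately show "measure \<mu> W \<le> 3/2 * (real (card K) / real n) + c0" by simp
    qed
  qed
qed

theorem mainTheorem10:
  fixes M :: "'a::euclidean_space set"
    and \<mu> :: "'a measure" and P :: "'w measure"
    and X :: "nat \<Rightarrow> 'w \<Rightarrow> 'a" and n :: nat and p2 :: real
  assumes "is_submanifold M"
    and "prob_space \<mu>" and "sets \<mu> = sets (restrict_space borel M)"
    and "prob_space P"
    and "0 < p2" and "p2 \<le> 1/2" and "0 < n"
    and "\<And>j. j < n \<Longrightarrow> X j \<in> measurable P \<mu>"
    and "\<And>j. j < n \<Longrightarrow> distr P \<mu> (X j) = \<mu>"
    and "prob_space.indep_vars P (\<lambda>_. \<mu>) X {..<n}"
  shows "let \<delta>2 = 4 / real n * ln (4 * real n ^ 2 / p2) in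
    \<exists>A \<in> sets P. measure P A \<ge> 1 - p2 \<and>
      (\<forall>\<omega>\<in>A. \<forall>i<n. \<forall>r>0.
         empirical n (\<lambda>j. X j \<omega>) (geo_ball M (X i \<omega>) r)
           \<le> 3/2 * measure \<mu> (geo_ball M (X i \<omega>) r) + 3 * \<delta>2
       \<and> measure \<mu> (geo_ball M (X i \<omega>) r)
           \<le> 3/2 * empirical n (\<lambda>j. X j \<omega>) (geo_ball M (X i \<omega>) r) + 3 * \<delta>2)"
  proof -
  interpret mu: prob_space \<mu> by fact
  have sm: "space \<mu> = M"
    using sets_eq_imp_space_eq[OF assms(3)] by (simp add: space_restrict_space)
  have Dm: "(\<lambda>p. geodesic_dist M (fst p) (snd p)) \<in> borel_measurable (\<mu> \<Otimes>\<^sub>M \<mu>)"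
    by (rule geodesic_measurable[OF assms(1) assms(3)])
  have eq: "{y \<in> space \<mu>. geodesic_dist M (fst (x, y)) (snd (x, y)) < ereal r} = geo_ball M x r" for x r
    by (simp add: geo_ball_def sm)
  show ?thesis
    using main_abstract[OF assms(2) assms(4) assms(5) assms(6) assms(7) assms(8) assms(9) assms(10) Dm]
    unfolding eq .
qed

end
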